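(* Suppose there exist a graph $H$ and a positive-valued function $h:V(H)\to\mathbb N$ such that $(H,h)$ is strict type 3 degenerate but not removable. Then there exist a graph $G$ and an integer $k$ such that, for the constant function $g:V(G)\to\{k\}$, the pair $(G,g)$ is strict type 3 degenerate but not removable.
   Context: All graphs are finite and simple. Strict type 3 degeneracy: for a graph $G$ and positive-valued $f:V(G)\to\mathbb N$, $\mathsf{ReduceValue}_v(G,f)$ returns $(G,f')$ with $f'(v)=f(v)-1$ and $f'=f$ elsewhere; for an edge $vw$, $\mathsf{EdgeDelete}_{vw}(G,f)$ returns $(G-vw,f')$ with $f'(v)=f(v)-f(w)$ and $f'=f$ elsewhere. $(G,f)$ is strict type 3 degenerate if repeated application of these operations reduces it to an edgeless graph together with a positive-valued function. Removability: for $u\in V(G)$ and $W\subseteq N(u)$, $\mathsf{DelSave}(G,f,u,W)$ outputs $G'=G-u$ and $f'$ with $f'(x)=f(x)-1$ for $x\in N(u)\setminus W$ and $f'(x)=f(x)$ otherwise; it is legal if $f(u)>\sum_{w\in W}f(w)$ and $f'(x)\ge1$ for all $x\in V(G')$. $(G,f)$ is removable if all vertices of $G$ can be deleted by successive legal $\mathsf{DelSave}$ applications, each time replacing $(G,f)$ by the output. *)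

theory Defs
  imports Main
begin

text \<open>A finite simple graph: a finite vertex set V and a set E of 2-element subsets of V.
  Vertex weights are integer-valued functions; only their values on V matter.\<close>

definition simple_graph :: "'a set \<Rightarrow> 'a set set \<Rightarrow> bool" where
  "simple_graph V E \<longleftrightarrow> finite V \<and>
     (\<forall>e\<in>E. \<exists>u v. u \<noteq> v \<and> u \<in> V \<and> v \<in> V \<and> e = {u, v})"

definition nbhd :: "'a set set \<Rightarrow> 'a \<Rightarrow> 'a set" where
  "nbhd E u = {x. {u, x} \<in> E}"

inductive strict_t3_degenerate :: "'a set \<Rightarrow> 'a set set \<Rightarrow> ('a \<Rightarrow> int) \<Rightarrow> bool" where
  finish: "E = {} \<Longrightarrow> (\<forall>v\<in>V. f v > 0) \<Longrightarrow> strict_t3_degenerate V E f"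
| reduce_value: "v \<in> V \<Longrightarrow> strict_t3_degenerate V E (f(v := f v - 1))
     \<Longrightarrow> strict_t3_degenerate V E f"
| edge_delete: "{v, w} \<in> E \<Longrightarrow> v \<noteq> w \<Longrightarrow>
     strict_t3_degenerate V (E - {{v, w}}) (f(v := f v - f w))
     \<Longrightarrow> strict_t3_degenerate V E f"

definition delsave_fun :: "'a set set \<Rightarrow> ('a \<Rightarrow> int) \<Rightarrow> 'a \<Rightarrow> 'a set \<Rightarrow> 'a \<Rightarrow> int" where
  "delsave_fun E f u W = (\<lambda>x. if x \<in> nbhd E u - W then f x - 1 else f x)"

inductive removable :: "'a set \<Rightarrow> 'a set set \<Rightarrow> ('a \<Rightarrow> int) \<Rightarrow> bool" where
  empty: "V = {} \<Longrightarrow> removable V E f"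
| delsave: "u \<in> V \<Longrightarrow> W \<subseteq> nbhd E u \<Longrightarrow> f u > (\<Sum>w\<in>W. f w) \<Longrightarrow>
     (\<forall>x\<in>V - {u}. delsave_fun E f u W x \<ge> 1) \<Longrightarrow>
     removable (V - {u}) {e\<in>E. u \<notin> e} (delsave_fun E f u W)
     \<Longrightarrow> removable V E f"

end

theory Submission
  imports Defs
begin

definition wfg :: "'a set \<Rightarrow> 'a set set \<Rightarrow> bool" where
  "wfg V E \<longleftrightarrow> (\<forall>e\<in>E. \<exists>a b. a \<noteq> b \<and> a \<in> V \<and> b \<in> V \<and> e = {a, b})"

lemma removable_pos:
  assumes "removable V E f" "wfg V E" "x \<in> V"
  shows "f x \<ge> 1"
  using assms(1)
proof cases
  case empty then show ?thesis using assms by simp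
next
  case (delsave u W)
  show ?thesis
  proof (cases "x = u")
    case False
    then have "delsave_fun E f u W x \<ge> 1" using delsave assms by auto
    then show ?thesis unfolding delsave_fun_def by (auto split: if_splits)
  next
    case True
    have "\<forall>w\<in>W. f w \<ge> 1"
    proof
      fix w assume "w \<in> W"
      then have "{u, w} \<in> E" using delsave unfolding nbhd_def by auto
      then obtain a b where "a \<noteq> b" "a \<in> V" "b \<in> V" "{u,w} = {a,b}" using assms(2) unfolding wfg_def by blast
      then have "w \<in> V" "w \<noteq> u" by (auto simp: doubleton_eq_iff)
      then have "delsave_fun E f u W w \<ge> 1" using delsave by auto
      then show "f w \<ge> 1" unfolding delsave_fun_def using \<open>w \<in> W\<close> by auto
    qed
    then have "sum f W \<ge> 0" by (intro sum_nonneg) auto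
    then show ?thesis using True delsave by auto
  qed
qed

lemma wfg_del: "wfg V E \<Longrightarrow> wfg (V - {u}) {e\<in>E. u \<notin> e}"
  unfolding wfg_def by fastforce

lemma removable_rename:
  assumes "removable V' E' g"
  shows "\<And>V E f. V' = \<phi> ` V \<Longrightarrow> E' = (\<lambda>e. \<phi> ` e) ` E \<Longrightarrow> inj_on \<phi> V \<Longrightarrow> wfg V E
    \<Longrightarrow> (\<forall>x\<in>V. f x = g (\<phi> x)) \<Longrightarrow> removable V E f"
  using assms
proof (induction rule: removable.induct)
  case (empty V' E' g V E f)
  then show ?case by (auto intro: removable.empty)
next
  case (delsave u' V' W' E' g V E f)
  from delsave.prems obtain u where u: "u \<in> V" "u' = \<phi> u" using delsave.hyps(1) by auto
  have edge_iff: "\<And>x. x \<in> V \<Longrightarrow> ({\<phi> u, \<phi> x} \<in> E') = ({u, x} \<in> E)"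
  proof
    fix x assume x: "x \<in> V" "{\<phi> u, \<phi> x} \<in> E'"
    then obtain e where e: "e \<in> E" "{\<phi> u, \<phi> x} = \<phi> ` e" using delsave.prems by auto
    then obtain a b where ab: "a \<in> V" "b \<in> V" "e = {a,b}" using delsave.prems(4) unfolding wfg_def by blast
    have "\<phi> ` {u, x} = \<phi> ` {a, b}" using e ab by simp
    then have "{u,x} = {a,b}" using inj_on_image_eq_iff[OF delsave.prems(3), of "{u,x}" "{a,b}"] u x ab by auto
    then show "{u, x} \<in> E" using e ab by simp
  next
    fix x assume "x \<in> V" "{u, x} \<in> E"
    then have "\<phi> ` {u, x} \<in> E'" using delsave.prems(2) by blast
    then show "{\<phi> u, \<phi> x} \<in> E'" by simp
  qed
  have nb: "nbhd E' u' \<subseteq> \<phi> ` V"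
  proof
    fix y assume "y \<in> nbhd E' u'"
    then have "{u', y} \<in> E'" unfolding nbhd_def by auto
    then obtain e where e: "e \<in> E" "{u', y} = \<phi> ` e" using delsave.prems by auto
    then obtain a b where ab: "a \<in> V" "b \<in> V" "e = {a,b}" using delsave.prems(4) unfolding wfg_def by blast
    then show "y \<in> \<phi> ` V" using e by (auto simp: doubleton_eq_iff)
  qed
  define W where "W = {x\<in>V. \<phi> x \<in> W'}"
  have W'eq: "W' = \<phi> ` W" using delsave.hyps(2) nb unfolding W_def by auto
  have injW: "inj_on \<phi> W" using delsave.prems(3) unfolding W_def by (auto intro: inj_on_subset)
  have sumeq: "sum g W' = sum f W"
    unfolding W'eq using sum.reindex[OF injW, of g] delsave.prems(5) unfolding W_def by simp
  have Wsub: "W \<subseteq> nbhd E u"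
  proof
    fix x assume "x \<in> W"
    then have "x \<in> V" "\<phi> x \<in> nbhd E' u'" using delsave.hyps(2) unfolding W_def by auto
    then show "x \<in> nbhd E u" using edge_iff u unfolding nbhd_def by auto
  qed
  have dfeq: "\<And>x. x \<in> V \<Longrightarrow> delsave_fun E' g u' W' (\<phi> x) = delsave_fun E f u W x"
  proof -
    fix x assume x: "x \<in> V"
    have "\<phi> x \<in> nbhd E' u' \<longleftrightarrow> x \<in> nbhd E u" using edge_iff[OF x] u unfolding nbhd_def by auto
    moreover have "\<phi> x \<in> W' \<longleftrightarrow> x \<in> W" using x unfolding W_def by auto
    ultimately show "delsave_fun E' g u' W' (\<phi> x) = delsave_fun E f u W x"
      unfolding delsave_fun_def using delsave.prems(5) x by auto
  qed
  have V'u: "V' - {u'} = \<phi> ` (V - {u})"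
    using delsave.prems(1,3) u by (auto simp: inj_on_def)
  have E'u: "{e \<in> E'. u' \<notin> e} = (\<lambda>e. \<phi> ` e) ` {e\<in>E. u \<notin> e}"
  proof -
    have "\<And>e. e \<in> E \<Longrightarrow> (u' \<in> \<phi> ` e) = (u \<in> e)"
    proof -
      fix e assume "e \<in> E"
      then obtain a b where ab: "a \<in> V" "b \<in> V" "e = {a,b}" using delsave.prems(4) unfolding wfg_def by blast
      then show "(u' \<in> \<phi> ` e) = (u \<in> e)" using u delsave.prems(3) by (auto simp: inj_on_def)
    qed
    then show ?thesis using delsave.prems(2) by auto
  qed
  have rem: "removable (V - {u}) {e\<in>E. u \<notin> e} (delsave_fun E f u W)"
    using delsave.IH[OF V'u E'u] delsave.prems(3,4) dfeq wfg_del[OF delsave.prems(4)]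
    by (auto intro: inj_on_subset)
  show ?case
  proof (rule removable.delsave[OF u(1) Wsub])
    show "sum f W < f u" using sumeq delsave.hyps(3) delsave.prems(5) u by simp
    show "\<forall>x\<in>V - {u}. 1 \<le> delsave_fun E f u W x"
    proof
      fix x assume x: "x \<in> V - {u}"
      then have px: "\<phi> x \<in> V' - {u'}" using V'u by auto
      have "1 \<le> delsave_fun E' g u' W' (\<phi> x)" using bspec[OF delsave.hyps(4) px] .
      then show "1 \<le> delsave_fun E f u W x" using dfeq x by simp
    qed
    show "removable (V - {u}) {e \<in> E. u \<notin> e} (delsave_fun E f u W)" by (rule rem)
  qed
qed

inductive reach :: "'a set \<Rightarrow> 'a set set \<Rightarrow> ('a \<Rightarrow> int) \<Rightarrow> 'a set set \<Rightarrow> ('a \<Rightarrow> int) \<Rightarrow> bool" where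
  rrefl: "reach V E f E f"
| rred: "v \<in> V \<Longrightarrow> reach V E (f(v := f v - 1)) E' f' \<Longrightarrow> reach V E f E' f'"
| rdel: "{v, w} \<in> E \<Longrightarrow> v \<noteq> w \<Longrightarrow> reach V (E - {{v, w}}) (f(v := f v - f w)) E' f'
     \<Longrightarrow> reach V E f E' f'"

lemma reach_trans: "reach V E1 f1 E2 f2 \<Longrightarrow> reach V E2 f2 E3 f3 \<Longrightarrow> reach V E1 f1 E3 f3"
  by (induction rule: reach.induct) (auto intro: reach.intros)

lemma reach_deg: "reach V E1 f1 E2 f2 \<Longrightarrow> strict_t3_degenerate V E2 f2 \<Longrightarrow> strict_t3_degenerate V E1 f1"
  by (induction rule: reach.induct) (auto intro: strict_t3_degenerate.intros)

lemma deg_reach: "strict_t3_degenerate V E f \<Longrightarrow> \<exists>f'. reach V E f {} f' \<and> (\<forall>v\<in>V. f' v > 0)"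
proof (induction rule: strict_t3_degenerate.induct)
  case (finish E V f) then show ?case by (auto intro: reach.intros)
next
  case (reduce_value v V E f)
  then obtain f' where "reach V E (f(v := f v - 1)) {} f'" "\<forall>v\<in>V. f' v > 0" by blast
  then show ?case using reduce_value.hyps(1) by (blast intro: reach.rred)
next
  case (edge_delete v w E V f)
  then obtain f' where "reach V (E - {{v, w}}) (f(v := f v - f w)) {} f'" "\<forall>v\<in>V. f' v > 0" by blast
  then show ?case using edge_delete.hyps(1,2) by (blast intro: reach.rdel)
qed

lemma reach_red_n: "v \<in> V \<Longrightarrow> reach V E f E (f(v := f v - int n))"
proof (induction n arbitrary: f)
  case 0 then show ?case by (simp add: reach.rrefl)
next
  case (Suc n)
  have r: "reach V E (f(v := f v - 1)) E ((f(v := f v - 1))(v := (f(v := f v - 1)) v - int n))"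
    using Suc by blast
  have eq: "(f(v := f v - 1))(v := (f(v := f v - 1)) v - int n) = f(v := f v - int (Suc n))"
    by auto
  show ?case using reach.rred[OF Suc.prems r] eq by metis
qed

lemma reach_reduce_to:
  assumes "finite S"
  shows "S \<subseteq> V \<Longrightarrow> (\<forall>y\<in>S. g y \<le> f y) \<Longrightarrow> (\<forall>y. y \<notin> S \<longrightarrow> g y = f y) \<Longrightarrow> reach V E f E g"
  using assms
proof (induction S arbitrary: f rule: finite_induct)
  case empty
  then have "g = f" by auto
  then show ?case by (simp add: reach.rrefl)
next
  case (insert y S f)
  define f1 where "f1 = f(y := g y)"
  have yV: "y \<in> V" using insert by auto
  have r0: "reach V E f E (f(y := f y - int (nat (f y - g y))))" by (rule reach_red_n[OF yV])
  have eq: "f(y := f y - int (nat (f y - g y))) = f1" unfolding f1_def using insert by auto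
  have r1: "reach V E f E f1" using r0 eq by metis
  have "reach V E f1 E g"
    by (rule insert.IH) (use insert in \<open>auto simp: f1_def\<close>)
  then show ?case using reach_trans r1 by blast
qed

lemma reach_lift:
  assumes "reach V E1 f1 E2 f2"
  shows "wfg V E1 \<Longrightarrow> inj_on \<phi> V \<Longrightarrow> \<phi> ` V \<subseteq> V' \<Longrightarrow> (\<forall>e\<in>E1. \<phi> ` e \<notin> R)
    \<Longrightarrow> (\<forall>x\<in>V. F1 (\<phi> x) = f1 x)
    \<Longrightarrow> \<exists>F2. reach V' (R \<union> (\<lambda>e. \<phi> ` e) ` E1) F1 (R \<union> (\<lambda>e. \<phi> ` e) ` E2) F2
         \<and> (\<forall>x\<in>V. F2 (\<phi> x) = f2 x) \<and> (\<forall>y. y \<notin> \<phi> ` V \<longrightarrow> F2 y = F1 y)"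
  using assms
proof (induction arbitrary: F1 rule: reach.induct)
  case (rrefl V E f)
  have "reach V' (R \<union> (\<lambda>e. \<phi> ` e) ` E) F1 (R \<union> (\<lambda>e. \<phi> ` e) ` E) F1" by (rule reach.rrefl)
  then show ?case using rrefl.prems(5) by blast
next
  case (rred v V E f E' f')
  define G1 where "G1 = F1(\<phi> v := F1 (\<phi> v) - 1)"
  have "\<forall>x\<in>V. G1 (\<phi> x) = (f(v := f v - 1)) x"
  proof
    fix x assume x: "x \<in> V"
    show "G1 (\<phi> x) = (f(v := f v - 1)) x"
    proof (cases "x = v")
      case True then show ?thesis using rred.prems(5) rred.hyps(1) by (simp add: G1_def)
    next
      case False
      then have "\<phi> x \<noteq> \<phi> v" using inj_onD[OF rred.prems(2) _ x rred.hyps(1)] by auto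
      then show ?thesis using rred.prems(5) x False by (simp add: G1_def)
    qed
  qed
  then obtain F2 where F2: "reach V' (R \<union> (\<lambda>e. \<phi> ` e) ` E) G1 (R \<union> (\<lambda>e. \<phi> ` e) ` E') F2"
     "\<forall>x\<in>V. F2 (\<phi> x) = f' x" "\<forall>y. y \<notin> \<phi> ` V \<longrightarrow> F2 y = G1 y"
    using rred.IH rred.prems(1-4) by blast
  have pv: "\<phi> v \<in> V'" using rred.prems(3) rred.hyps(1) by blast
  have r: "reach V' (R \<union> (\<lambda>e. \<phi> ` e) ` E) F1 (R \<union> (\<lambda>e. \<phi> ` e) ` E') F2"
    using reach.rred[OF pv F2(1)[unfolded G1_def]] .
  have "\<forall>y. y \<notin> \<phi> ` V \<longrightarrow> F2 y = F1 y"
  proof (intro allI impI)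
    fix y assume "y \<notin> \<phi> ` V"
    then have "y \<noteq> \<phi> v" using rred.hyps(1) by blast
    then show "F2 y = F1 y" using F2(3) \<open>y \<notin> \<phi> ` V\<close> by (simp add: G1_def)
  qed
  then show ?case using F2(2) r by blast
next
  case (rdel v w E V f E' f')
  obtain a b where ab: "a \<in> V" "b \<in> V" "{v, w} = {a, b}" using rdel.prems(1) rdel.hyps(1) unfolding wfg_def by blast
  have vw: "v \<in> V" "w \<in> V" using ab by (auto simp: doubleton_eq_iff)
  define G1 where "G1 = F1(\<phi> v := F1 (\<phi> v) - F1 (\<phi> w))"
  have "\<forall>x\<in>V. G1 (\<phi> x) = (f(v := f v - f w)) x"
  proof
    fix x assume x: "x \<in> V"
    show "G1 (\<phi> x) = (f(v := f v - f w)) x"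
    proof (cases "x = v")
      case True then show ?thesis using rdel.prems(5) vw by (simp add: G1_def)
    next
      case False
      then have "\<phi> x \<noteq> \<phi> v" using inj_onD[OF rdel.prems(2) _ x vw(1)] by auto
      then show ?thesis using rdel.prems(5) x False by (simp add: G1_def)
    qed
  qed
  moreover have "wfg V (E - {{v, w}})" using rdel.prems(1) unfolding wfg_def by blast
  moreover have "\<forall>e\<in>E - {{v, w}}. \<phi> ` e \<notin> R" using rdel.prems(4) by blast
  ultimately obtain F2 where F2: "reach V' (R \<union> (\<lambda>e. \<phi> ` e) ` (E - {{v, w}})) G1 (R \<union> (\<lambda>e. \<phi> ` e) ` E') F2"
     "\<forall>x\<in>V. F2 (\<phi> x) = f' x" "\<forall>y. y \<notin> \<phi> ` V \<longrightarrow> F2 y = G1 y"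
    using rdel.IH[OF _ rdel.prems(2,3)] by blast
  have img: "\<phi> ` {v, w} = {\<phi> v, \<phi> w}" by simp
  have "\<phi> ` {v, w} \<notin> R" using rdel.prems(4) rdel.hyps(1) by blast
  then have inR: "{\<phi> v, \<phi> w} \<notin> R" using img by simp
  have eq: "(R \<union> (\<lambda>e. \<phi> ` e) ` E) - {{\<phi> v, \<phi> w}} = R \<union> (\<lambda>e. \<phi> ` e) ` (E - {{v, w}})"
  proof -
    have key: "\<And>e. e \<in> E \<Longrightarrow> \<phi> ` e = {\<phi> v, \<phi> w} \<Longrightarrow> e = {v, w}"
    proof -
      fix e assume e: "e \<in> E" "\<phi> ` e = {\<phi> v, \<phi> w}"
      obtain a' b' where "a' \<in> V" "b' \<in> V" "e = {a', b'}" using rdel.prems(1) e(1) unfolding wfg_def by blast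
      then have eV: "e \<subseteq> V" by simp
      have vwV: "{v,w} \<subseteq> V" using vw by blast
      have "(\<phi> ` e = \<phi> ` {v,w}) = (e = {v,w})" by (rule inj_on_image_eq_iff[OF rdel.prems(2) eV vwV])
      then show "e = {v, w}" using e(2) img by simp
    qed
    show ?thesis
    proof (rule set_eqI)
      fix x
      show "x \<in> R \<union> (\<lambda>e. \<phi> ` e) ` E - {{\<phi> v, \<phi> w}} \<longleftrightarrow> x \<in> R \<union> (\<lambda>e. \<phi> ` e) ` (E - {{v, w}})"
      proof
        assume x: "x \<in> R \<union> (\<lambda>e. \<phi> ` e) ` E - {{\<phi> v, \<phi> w}}"
        show "x \<in> R \<union> (\<lambda>e. \<phi> ` e) ` (E - {{v, w}})"
        proof (cases "x \<in> R")
          case True then show ?thesis by (rule UnI1)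
        next
          case False
          then obtain e where e: "e \<in> E" "x = \<phi> ` e" using x by blast
          have "x \<noteq> {\<phi> v, \<phi> w}" using x by blast
          then have "e \<noteq> {v,w}" using img e(2) by auto
          then have "e \<in> E - {{v,w}}" using e(1) by blast
          then show ?thesis using e(2) by blast
        qed
      next
        assume x: "x \<in> R \<union> (\<lambda>e. \<phi> ` e) ` (E - {{v, w}})"
        have "x \<noteq> {\<phi> v, \<phi> w}"
        proof (cases "x \<in> R")
          case True then show ?thesis using inR by blast
        next
          case False
          then obtain e where e: "e \<in> E" "e \<noteq> {v,w}" "x = \<phi> ` e" using x by blast
          then show ?thesis using key by blast
        qed
        then show "x \<in> R \<union> (\<lambda>e. \<phi> ` e) ` E - {{\<phi> v, \<phi> w}}" using x by blast
      qed
    qed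
  qed
  have mem: "{\<phi> v, \<phi> w} \<in> R \<union> (\<lambda>e. \<phi> ` e) ` E" using rdel.hyps(1) img by (metis UnI2 imageI)
  have neq: "\<phi> v \<noteq> \<phi> w" using rdel.hyps(2) inj_onD[OF rdel.prems(2) _ vw] by blast
  have r0: "reach V' ((R \<union> (\<lambda>e. \<phi> ` e) ` E) - {{\<phi> v, \<phi> w}}) G1 (R \<union> (\<lambda>e. \<phi> ` e) ` E') F2"
    by (subst eq) (rule F2(1))
  have r: "reach V' (R \<union> (\<lambda>e. \<phi> ` e) ` E) F1 (R \<union> (\<lambda>e. \<phi> ` e) ` E') F2"
    using reach.rdel[OF mem neq r0[unfolded G1_def]] .
  have "\<forall>y. y \<notin> \<phi> ` V \<longrightarrow> F2 y = F1 y"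
  proof (intro allI impI)
    fix y assume "y \<notin> \<phi> ` V"
    then have "y \<noteq> \<phi> v" using vw by blast
    then show "F2 y = F1 y" using F2(3) \<open>y \<notin> \<phi> ` V\<close> by (simp add: G1_def)
  qed
  then show ?case using F2(2) r by blast
qed

lemma deg_rename:
  assumes "strict_t3_degenerate V E f" "wfg V E" "inj_on \<phi> V" "\<forall>x\<in>V. F (\<phi> x) = f x"
  shows "strict_t3_degenerate (\<phi> ` V) ((\<lambda>e. \<phi> ` e) ` E) F"
proof -
  obtain f' where f': "reach V E f {} f'" "\<forall>v\<in>V. f' v > 0" using deg_reach[OF assms(1)] by blast
  have e: "\<forall>e\<in>E. \<phi> ` e \<notin> {}" by blast
  obtain F2 where F2: "reach (\<phi> ` V) ({} \<union> (\<lambda>e. \<phi> ` e) ` E) F ({} \<union> (\<lambda>e. \<phi> ` e) ` {}) F2"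
    "\<forall>x\<in>V. F2 (\<phi> x) = f' x"
    using reach_lift[OF f'(1) assms(2) assms(3) subset_refl e assms(4)] by blast
  have r: "reach (\<phi> ` V) ((\<lambda>e. \<phi> ` e) ` E) F {} F2" using F2(1) by simp
  have "\<forall>y\<in>\<phi> ` V. F2 y > 0" using F2(2) f'(2) by auto
  then have "strict_t3_degenerate (\<phi> ` V) {} F2" by (intro strict_t3_degenerate.finish) auto
  then show ?thesis using reach_deg r by blast
qed

definition units :: "'a set \<Rightarrow> 'a list set" where
  "units X = {\<sigma>. distinct \<sigma> \<and> set \<sigma> \<subseteq> X}"
definition intE :: "'a set set \<Rightarrow> 'a list set \<Rightarrow> ('a list \<times> 'a) set set" where
  "intE EH S = {(\<lambda>v. (\<sigma>, v)) ` e | \<sigma> e. \<sigma> \<in> S \<and> e \<in> EH}"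
definition extE :: "'a list set \<Rightarrow> ('a list \<times> 'a) set set" where
  "extE S = {{(\<rho>, x), (\<rho> @ x # \<tau>, x)} | \<rho> x \<tau>. \<rho> @ x # \<tau> \<in> S}"
definition rV :: "'a set \<Rightarrow> 'a set \<Rightarrow> ('a list \<times> 'a) set" where
  "rV H X = units X \<times> H"
definition rE :: "'a set set \<Rightarrow> 'a set \<Rightarrow> ('a list \<times> 'a) set set" where
  "rE EH X = intE EH (units X) \<union> extE (units X)"
definition rf :: "('a \<Rightarrow> int) \<Rightarrow> 'a set \<Rightarrow> 'a list \<times> 'a \<Rightarrow> int" where
  "rf h X p = h (snd p) + (if snd p \<in> X then 1 else 0)"
definition Hs :: "'a set \<Rightarrow> ('a list \<times> 'a) set \<Rightarrow> 'a list \<Rightarrow> 'a set" where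
  "Hs H Vs \<sigma> = {v\<in>H. (\<sigma>, v) \<in> Vs}"
definition EHs :: "'a set set \<Rightarrow> 'a set \<Rightarrow> ('a list \<times> 'a) set \<Rightarrow> 'a list \<Rightarrow> 'a set set" where
  "EHs EH H Vs \<sigma> = {e\<in>EH. e \<subseteq> Hs H Vs \<sigma>}"

lemma wfg_edge: "wfg V E \<Longrightarrow> {u, w} \<in> E \<Longrightarrow> u \<noteq> w \<and> u \<in> V \<and> w \<in> V"
proof -
  assume a: "wfg V E" "{u, w} \<in> E"
  then obtain x y where xy: "x \<noteq> y" "x \<in> V" "y \<in> V" "{u, w} = {x, y}" unfolding wfg_def by blast
  then show ?thesis by (auto simp: doubleton_eq_iff)
qed

lemma simple_iff: "simple_graph V E \<longleftrightarrow> finite V \<and> wfg V E"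
  unfolding simple_graph_def wfg_def by (rule refl)

lemma simple_wfg: "simple_graph V E \<Longrightarrow> wfg V E"
  unfolding simple_iff by blast

lemma units_prefix: "\<rho> @ \<tau> \<in> units X \<Longrightarrow> \<rho> \<in> units X"
  unfolding units_def by auto

lemma finite_units: "finite X \<Longrightarrow> finite (units X)"
proof -
  assume fX: "finite X"
  have "units X \<subseteq> {xs. set xs \<subseteq> X \<and> length xs \<le> card X}"
  proof
    fix \<sigma> assume "\<sigma> \<in> units X"
    then have d: "distinct \<sigma>" "set \<sigma> \<subseteq> X" by (auto simp: units_def)
    then have "length \<sigma> = card (set \<sigma>)" by (simp add: distinct_card)
    also have "\<dots> \<le> card X" using card_mono[OF fX d(2)] .
    finally show "\<sigma> \<in> {xs. set xs \<subseteq> X \<and> length xs \<le> card X}" using d by simp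
  qed
  then show ?thesis using finite_lists_length_le[OF fX] finite_subset by blast
qed

lemma ext_cases:
  assumes "{a, b} \<in> extE S"
  obtains \<rho> x \<tau> where "\<rho> @ x # \<tau> \<in> S"
    "(a = (\<rho>, x) \<and> b = (\<rho> @ x # \<tau>, x)) \<or> (a = (\<rho> @ x # \<tau>, x) \<and> b = (\<rho>, x))"
proof -
  obtain \<rho> x \<tau> where r: "\<rho> @ x # \<tau> \<in> S" "{a, b} = {(\<rho>, x), (\<rho> @ x # \<tau>, x)}"
    using assms unfolding extE_def by blast
  then show ?thesis using that by (auto simp: doubleton_eq_iff)
qed

lemma ext_fst: "{a, b} \<in> extE S \<Longrightarrow> fst a \<noteq> fst b"
  by (erule ext_cases) auto

lemma ext_snd: "{a, b} \<in> extE S \<Longrightarrow> snd a = snd b"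
  by (erule ext_cases) auto

lemma ext_in:
  assumes "{a, b} \<in> extE (units X)" "X \<subseteq> H"
  shows "a \<in> rV H X \<and> b \<in> rV H X \<and> snd a \<in> X"
  using assms(1)
proof (rule ext_cases)
  fix \<rho> x \<tau> assume r: "\<rho> @ x # \<tau> \<in> units X"
    "(a = (\<rho>, x) \<and> b = (\<rho> @ x # \<tau>, x)) \<or> (a = (\<rho> @ x # \<tau>, x) \<and> b = (\<rho>, x))"
  have "\<rho> \<in> units X" using units_prefix r(1) by blast
  moreover have "x \<in> X" using r(1) unfolding units_def by auto
  ultimately show ?thesis using r assms(2) unfolding rV_def by auto
qed

lemma int_cases:
  assumes "{a, b} \<in> intE EH S" "a \<noteq> b"
  shows "fst a = fst b \<and> fst a \<in> S \<and> {snd a, snd b} \<in> EH"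
proof -
  obtain \<sigma> e where r: "\<sigma> \<in> S" "e \<in> EH" "{a, b} = (\<lambda>v. (\<sigma>, v)) ` e"
    using assms(1) unfolding intE_def by blast
  have "a \<in> (\<lambda>v. (\<sigma>, v)) ` e" "b \<in> (\<lambda>v. (\<sigma>, v)) ` e" using r(3) by auto
  then have fa: "fst a = \<sigma>" "fst b = \<sigma>" by auto
  have "snd ` {a, b} = snd ` (\<lambda>v. (\<sigma>, v)) ` e" using r(3) by simp
  then have "e = {snd a, snd b}" by (simp add: image_image)
  then show ?thesis using fa r by auto
qed

lemma int_intro: "\<sigma> \<in> S \<Longrightarrow> {u, v} \<in> EH \<Longrightarrow> {(\<sigma>, u), (\<sigma>, v)} \<in> intE EH S"
proof -
  assume a: "\<sigma> \<in> S" "{u, v} \<in> EH"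
  have "{(\<sigma>, u), (\<sigma>, v)} = (\<lambda>x. (\<sigma>, x)) ` {u, v}" by simp
  then show ?thesis using a unfolding intE_def by blast
qed

lemma rE_wfg:
  assumes "simple_graph H EH" "X \<subseteq> H"
  shows "wfg (rV H X) (rE EH X)"
  unfolding wfg_def
proof
  fix e assume "e \<in> rE EH X"
  then show "\<exists>a b. a \<noteq> b \<and> a \<in> rV H X \<and> b \<in> rV H X \<and> e = {a, b}"
    unfolding rE_def
  proof
    assume "e \<in> intE EH (units X)"
    then obtain \<sigma> e0 where r: "\<sigma> \<in> units X" "e0 \<in> EH" "e = (\<lambda>v. (\<sigma>, v)) ` e0"
      unfolding intE_def by blast
    have "\<forall>e\<in>EH. \<exists>a b. a \<noteq> b \<and> a \<in> H \<and> b \<in> H \<and> e = {a, b}"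
      using assms(1) unfolding simple_graph_def by (rule conjunct2)
    from bspec[OF this r(2)] obtain a b where ab: "a \<noteq> b" "a \<in> H" "b \<in> H" "e0 = {a, b}"
      by blast
    show ?thesis
      by (rule exI[of _ "(\<sigma>, a)"], rule exI[of _ "(\<sigma>, b)"]) (use r ab in \<open>auto simp: rV_def\<close>)
  next
    assume e: "e \<in> extE (units X)"
    then obtain \<rho> x \<tau> where r: "\<rho> @ x # \<tau> \<in> units X" "e = {(\<rho>, x), (\<rho> @ x # \<tau>, x)}"
      unfolding extE_def by blast
    have "{(\<rho>, x), (\<rho> @ x # \<tau>, x)} \<in> extE (units X)" using e r(2) by simp
    note ext_in[OF this assms(2)]
    then show ?thesis using r(2) by (intro exI[of _ "(\<rho>, x)"] exI[of _ "(\<rho> @ x # \<tau>, x)"]) auto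
  qed
qed

lemma rV_finite: "finite H \<Longrightarrow> X \<subseteq> H \<Longrightarrow> finite (rV H X)"
proof -
  assume a: "finite H" "X \<subseteq> H"
  then have "finite X" by (rule finite_subset[rotated])
  then show ?thesis unfolding rV_def using a(1) by (intro finite_cartesian_product finite_units)
qed

lemma rE_simple: "simple_graph H EH \<Longrightarrow> X \<subseteq> H \<Longrightarrow> simple_graph (rV H X) (rE EH X)"
proof -
  assume a: "simple_graph H EH" "X \<subseteq> H"
  have fH: "finite H" using a(1) unfolding simple_iff by (rule conjunct1)
  show ?thesis unfolding simple_iff by (rule conjI[OF rV_finite[OF fH a(2)] rE_wfg[OF a]])
qed

lemma forcing_aux:
  assumes fX: "finite X"
    and edge: "\<And>\<rho> x \<tau>. \<rho> @ x # \<tau> \<in> units X \<Longrightarrow> (\<rho>, x) \<in> C \<or> (\<rho> @ x # \<tau>, x) \<in> C"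
  shows "\<And>\<rho>. n = card (X - set \<rho>) \<Longrightarrow> \<rho> \<in> units X
    \<Longrightarrow> (\<forall>\<sigma> x. x \<in> set \<rho> \<longrightarrow> \<rho> @ \<sigma> \<in> units X \<longrightarrow> (\<rho> @ \<sigma>, x) \<in> C)
    \<Longrightarrow> \<exists>\<sigma>. \<rho> @ \<sigma> \<in> units X \<and> (\<forall>x\<in>X. (\<rho> @ \<sigma>, x) \<in> C)"
proof (induction n rule: less_induct)
  case (less n \<rho>)
  show ?case
  proof (cases "\<forall>x\<in>X. (\<rho>, x) \<in> C")
    case True
    then show ?thesis using less.prems(2) by (intro exI[of _ "[]"]) simp
  next
    case False
    then obtain x where x: "x \<in> X" "(\<rho>, x) \<notin> C" by blast
    have xn: "x \<notin> set \<rho>"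
    proof
      assume "x \<in> set \<rho>"
      moreover have "\<rho> @ [] \<in> units X" using less.prems(2) by simp
      ultimately have "(\<rho> @ [], x) \<in> C" using less.prems(3) by blast
      then show False using x(2) by simp
    qed
    define \<rho>' where "\<rho>' = \<rho> @ [x]"
    have u': "\<rho>' \<in> units X" using less.prems(2) x(1) xn unfolding \<rho>'_def units_def by auto
    have c: "card (X - set \<rho>') < n"
    proof -
      have "X - set \<rho>' = (X - set \<rho>) - {x}" unfolding \<rho>'_def by auto
      moreover have "x \<in> X - set \<rho>" using x xn by blast
      moreover have "card ((X - set \<rho>) - {x}) < card (X - set \<rho>)"
        by (rule card_Diff1_less) (use fX \<open>x \<in> X - set \<rho>\<close> in auto)
      ultimately show ?thesis using less.prems(1) by simp
    qed
    have p: "\<forall>\<sigma> x'. x' \<in> set \<rho>' \<longrightarrow> \<rho>' @ \<sigma> \<in> units X \<longrightarrow> (\<rho>' @ \<sigma>, x') \<in> C"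
    proof (intro allI impI)
      fix \<sigma> x' assume a: "x' \<in> set \<rho>'" "\<rho>' @ \<sigma> \<in> units X"
      have eq: "\<rho>' @ \<sigma> = \<rho> @ x # \<sigma>" unfolding \<rho>'_def by simp
      show "(\<rho>' @ \<sigma>, x') \<in> C"
      proof (cases "x' = x")
        case True
        have "\<rho> @ x # \<sigma> \<in> units X" using a(2) eq by simp
        then have "(\<rho>, x) \<in> C \<or> (\<rho> @ x # \<sigma>, x) \<in> C" by (rule edge)
        then have "(\<rho> @ x # \<sigma>, x) \<in> C" using x(2) by blast
        then show ?thesis using eq True by simp
      next
        case False
        then have "x' \<in> set \<rho>" using a(1) unfolding \<rho>'_def by auto
        have "\<rho> @ (x # \<sigma>) \<in> units X" using a(2) eq by simp
        then have "(\<rho> @ (x # \<sigma>), x') \<in> C" using less.prems(3) \<open>x' \<in> set \<rho>\<close> by blast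
        then show ?thesis using eq by simp
      qed
    qed
    obtain \<sigma> where s: "\<rho>' @ \<sigma> \<in> units X" "\<forall>x\<in>X. (\<rho>' @ \<sigma>, x) \<in> C"
      using less.IH[OF c refl u' p] by blast
    then show ?thesis unfolding \<rho>'_def by (intro exI[of _ "x # \<sigma>"]) simp
  qed
qed

lemma forcing:
  assumes "finite X"
    and "\<And>\<rho> x \<tau>. \<rho> @ x # \<tau> \<in> units X \<Longrightarrow> (\<rho>, x) \<in> C \<or> (\<rho> @ x # \<tau>, x) \<in> C"
  shows "\<exists>\<sigma>\<in>units X. \<forall>x\<in>X. (\<sigma>, x) \<in> C"
proof -
  have "[] \<in> units X" unfolding units_def by simp
  then show ?thesis using forcing_aux[OF assms refl, of "[]"] by auto
qed

context
  fixes H :: "'a set" and EH :: "'a set set" and X :: "'a set"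
  assumes sg: "simple_graph H EH" and XH: "X \<subseteq> H"
begin

lemma rE_edge_same:
  assumes "{a, b} \<in> rE EH X" "fst a = fst b" "a \<noteq> b"
  shows "fst a \<in> units X \<and> {snd a, snd b} \<in> EH"
proof -
  have "{a, b} \<notin> extE (units X)" using ext_fst assms(2) by blast
  then have "{a, b} \<in> intE EH (units X)" using assms(1) unfolding rE_def by blast
  then show ?thesis using int_cases[OF _ assms(3)] by blast
qed

lemma rem_claim:
  assumes "removable Vs E f"
  shows "Vs \<subseteq> rV H X \<Longrightarrow> E = {e\<in>rE EH X. e \<subseteq> Vs}
    \<Longrightarrow> (\<forall>\<sigma>\<in>units X. \<forall>v\<in>H. (\<sigma>, v) \<in> Vs \<longrightarrow> f (\<sigma>, v) - (if v \<in> X \<and> (\<sigma>, v) \<notin> cr then 1 else 0) \<le> q \<sigma> v)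
    \<Longrightarrow> (\<forall>a b. {a, b} \<in> extE (units X) \<longrightarrow> (a \<notin> Vs \<or> b \<notin> Vs) \<longrightarrow> a \<in> cr \<or> b \<in> cr)
    \<Longrightarrow> \<exists>cr'. cr \<subseteq> cr' \<and> (\<forall>a. a \<notin> Vs \<longrightarrow> (a \<in> cr' \<longleftrightarrow> a \<in> cr))
        \<and> (\<forall>a b. {a, b} \<in> extE (units X) \<longrightarrow> a \<in> cr' \<or> b \<in> cr')
        \<and> (\<forall>\<sigma>\<in>units X. (\<forall>x\<in>X. (\<sigma>, x) \<in> cr') \<longrightarrow> removable (Hs H Vs \<sigma>) (EHs EH H Vs \<sigma>) (q \<sigma>))"
  using assms
proof (induction arbitrary: cr q rule: removable.induct)
  case (empty V E f cr q)
  have "\<forall>a b. {a, b} \<in> extE (units X) \<longrightarrow> a \<in> cr \<or> b \<in> cr" using empty.prems(4) empty.hyps by blast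
  moreover have "\<forall>\<sigma>. Hs H V \<sigma> = {}" using empty.hyps unfolding Hs_def by blast
  ultimately show ?case by (intro exI[of _ cr]) (auto intro: removable.empty)
next
  case (delsave u V W E f cr q)
  note VG = delsave.prems(1) and Edef = delsave.prems(2) and Inv1 = delsave.prems(3)
    and Inv2 = delsave.prems(4)
  obtain \<sigma>0 u0 where u: "u = (\<sigma>0, u0)" by (cases u)
  have uV: "u \<in> V" using delsave.hyps(1) .
  have s0U: "\<sigma>0 \<in> units X" and u0H: "u0 \<in> H" using VG uV u unfolding rV_def by auto
  have wf: "wfg (rV H X) (rE EH X)" by (rule rE_wfg[OF sg XH])
  have fH: "finite H" using sg unfolding simple_iff by (rule conjunct1)
  have finV: "finite V" using rV_finite[OF fH XH] VG by (rule finite_subset[rotated])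
  have nbE: "\<And>w. w \<in> nbhd E u \<Longrightarrow> {u, w} \<in> rE EH X \<and> {u, w} \<subseteq> V"
    using Edef unfolding nbhd_def by blast
  have nbne: "\<And>w. w \<in> nbhd E u \<Longrightarrow> w \<noteq> u \<and> w \<in> V"
  proof -
    fix w assume "w \<in> nbhd E u"
    then have "{u, w} \<in> rE EH X" "{u, w} \<subseteq> V" using nbE by auto
    then show "w \<noteq> u \<and> w \<in> V" using wfg_edge[OF wf] by blast
  qed
  have finW: "finite W" using delsave.hyps(2) nbne finV by (meson finite_subset subsetI)
  have Wpos: "\<And>w. w \<in> W \<Longrightarrow> f w \<ge> 1"
  proof -
    fix w assume w: "w \<in> W"
    then have "w \<in> V - {u}" using nbne delsave.hyps(2) by blast
    then have "delsave_fun E f u W w \<ge> 1" using delsave.hyps(4) by blast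
    then show "f w \<ge> 1" using w unfolding delsave_fun_def by simp
  qed
  define extN where "extN = {w \<in> nbhd E u. fst w \<noteq> \<sigma>0}"
  define cr1 where "cr1 = cr \<union> (if W \<inter> extN \<noteq> {} then {u} else {}) \<union> (extN - W)"
  define Wv where "Wv = {v. (\<sigma>0, v) \<in> W}"
  define WH where "WH = {v \<in> Wv. q \<sigma>0 v \<le> f (\<sigma>0, v)}"
  define H0 where "H0 = Hs H V \<sigma>0"
  define E0 where "E0 = EHs EH H V \<sigma>0"
  define q1 where "q1 = q(\<sigma>0 := delsave_fun E0 (q \<sigma>0) u0 WH)"
  define f' where "f' = delsave_fun E f u W"
  have crcr1: "cr \<subseteq> cr1" unfolding cr1_def by blast
  have extNV: "extN \<subseteq> V" using nbne unfolding extN_def by blast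
  have uext: "u \<notin> extN" using nbne unfolding extN_def by blast
  have N4: "\<And>v. v \<in> H \<Longrightarrow> ((\<sigma>0, v) \<in> nbhd E u \<longleftrightarrow> v \<in> nbhd E0 u0)"
  proof
    fix v assume vH: "v \<in> H" and a: "(\<sigma>0, v) \<in> nbhd E u"
    then have e1: "{u, (\<sigma>0, v)} \<in> rE EH X" "{u, (\<sigma>0, v)} \<subseteq> V" using nbE by auto
    have "(\<sigma>0, v) \<noteq> u" using nbne a by blast
    then have "{u0, v} \<in> EH" using rE_edge_same[OF e1(1)] u by auto
    moreover have "{u0, v} \<subseteq> H0" using e1(2) u vH u0H unfolding H0_def Hs_def by auto
    ultimately show "v \<in> nbhd E0 u0" unfolding nbhd_def E0_def EHs_def H0_def by auto
  next
    fix v assume vH: "v \<in> H" and a: "v \<in> nbhd E0 u0"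
    then have e: "{u0, v} \<in> EH" "{u0, v} \<subseteq> H0" unfolding nbhd_def E0_def EHs_def H0_def by auto
    have "{(\<sigma>0, u0), (\<sigma>0, v)} \<in> intE EH (units X)" by (rule int_intro[OF s0U e(1)])
    then have "{u, (\<sigma>0, v)} \<in> rE EH X" unfolding rE_def u by blast
    moreover have "{u, (\<sigma>0, v)} \<subseteq> V" using e(2) uV unfolding H0_def Hs_def by auto
    ultimately show "(\<sigma>0, v) \<in> nbhd E u" using Edef unfolding nbhd_def by blast
  qed
  have nb_own: "\<And>w. w \<in> nbhd E u \<Longrightarrow> fst w = \<sigma>0 \<Longrightarrow> snd w \<in> H \<and> w = (\<sigma>0, snd w)"
  proof -
    fix w assume "w \<in> nbhd E u" "fst w = \<sigma>0"
    then have "w \<in> rV H X" using nbne VG by blast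
    then show "snd w \<in> H \<and> w = (\<sigma>0, snd w)" using \<open>fst w = \<sigma>0\<close> unfolding rV_def by (cases w) auto
  qed
  have Vn: "V - {u} \<subseteq> rV H X" using VG by blast
  have En: "{e \<in> E. u \<notin> e} = {e \<in> rE EH X. e \<subseteq> V - {u}}" using Edef by blast
  have Inv1n: "\<forall>\<sigma>\<in>units X. \<forall>v\<in>H. (\<sigma>, v) \<in> V - {u} \<longrightarrow>
      f' (\<sigma>, v) - (if v \<in> X \<and> (\<sigma>, v) \<notin> cr1 then 1 else 0) \<le> q1 \<sigma> v"
  proof (intro ballI impI)
    fix \<sigma> v assume sU: "\<sigma> \<in> units X" and vH: "v \<in> H" and w: "(\<sigma>, v) \<in> V - {u}"
    have old: "f (\<sigma>, v) - (if v \<in> X \<and> (\<sigma>, v) \<notin> cr then 1 else 0) \<le> q \<sigma> v"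
      using Inv1 sU vH w by blast
    show "f' (\<sigma>, v) - (if v \<in> X \<and> (\<sigma>, v) \<notin> cr1 then 1 else 0) \<le> q1 \<sigma> v"
    proof (cases "\<sigma> = \<sigma>0")
      case True
      have vu: "v \<noteq> u0" using w u True by auto
      have nex: "(\<sigma>, v) \<notin> extN" unfolding extN_def using True by simp
      have same: "((\<sigma>, v) \<in> cr1) = ((\<sigma>, v) \<in> cr)" using nex w unfolding cr1_def by auto
      have q1v: "q1 \<sigma> v = (if v \<in> nbhd E0 u0 - WH then q \<sigma> v - 1 else q \<sigma> v)"
        unfolding q1_def True delsave_fun_def by simp
      have f'v: "f' (\<sigma>, v) = (if (\<sigma>, v) \<in> nbhd E u - W then f (\<sigma>, v) - 1 else f (\<sigma>, v))"
        unfolding f'_def delsave_fun_def by simp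
      have nbiff: "(\<sigma>, v) \<in> nbhd E u \<longleftrightarrow> v \<in> nbhd E0 u0" using N4[OF vH] True by simp
      have WHiff: "v \<in> WH \<longleftrightarrow> (\<sigma>, v) \<in> W \<and> q \<sigma> v \<le> f (\<sigma>, v)"
        unfolding WH_def Wv_def True by simp
      show ?thesis using old same q1v f'v nbiff WHiff by (auto split: if_splits)
    next
      case False
      have q1v: "q1 \<sigma> v = q \<sigma> v" unfolding q1_def using False by simp
      show ?thesis
      proof (cases "(\<sigma>, v) \<in> nbhd E u - W")
        case True
        then have "(\<sigma>, v) \<in> cr1" unfolding cr1_def extN_def using False u by auto
        moreover have "f' (\<sigma>, v) = f (\<sigma>, v) - 1" unfolding f'_def delsave_fun_def using True by simp
        ultimately show ?thesis using old q1v by (auto split: if_splits)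
      next
        case nF: False
        then have "f' (\<sigma>, v) = f (\<sigma>, v)" unfolding f'_def delsave_fun_def by simp
        moreover have "((\<sigma>, v) \<in> cr1) = ((\<sigma>, v) \<in> cr)"
        proof -
          have n1: "(\<sigma>, v) \<noteq> u" using False u by auto
          have n2: "(\<sigma>, v) \<notin> extN - W" using nF unfolding extN_def by blast
          show ?thesis unfolding cr1_def using n1 n2 by (simp; blast)
        qed
        ultimately show ?thesis using old q1v by (auto split: if_splits)
      qed
    qed
  qed
  have Inv2n: "\<forall>a b. {a, b} \<in> extE (units X) \<longrightarrow> (a \<notin> V - {u} \<or> b \<notin> V - {u}) \<longrightarrow> a \<in> cr1 \<or> b \<in> cr1"
  proof (intro allI impI)
    fix a b assume ab: "{a, b} \<in> extE (units X)" and nv: "a \<notin> V - {u} \<or> b \<notin> V - {u}"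
    show "a \<in> cr1 \<or> b \<in> cr1"
    proof (cases "a \<notin> V \<or> b \<notin> V")
      case True then show ?thesis using Inv2 ab crcr1 by blast
    next
      case False
      then have abV: "a \<in> V" "b \<in> V" by auto
      have key: "\<And>c d. {c, d} \<in> extE (units X) \<Longrightarrow> c = u \<Longrightarrow> d \<in> V \<Longrightarrow> c \<in> cr1 \<or> d \<in> cr1"
      proof -
        fix c d assume cd: "{c, d} \<in> extE (units X)" "c = u" "d \<in> V"
        have fd: "fst d \<noteq> \<sigma>0" using ext_fst[OF cd(1)] cd(2) u by simp
        have "{c, d} \<in> rE EH X" using cd(1) unfolding rE_def by blast
        moreover have "{c, d} \<subseteq> V" using cd uV by blast
        ultimately have "d \<in> nbhd E u" using Edef cd(2) unfolding nbhd_def by blast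
        then have dN: "d \<in> extN" unfolding extN_def using fd by blast
        show "c \<in> cr1 \<or> d \<in> cr1"
        proof (cases "d \<in> W")
          case True then have "W \<inter> extN \<noteq> {}" using dN by blast
          then show ?thesis unfolding cr1_def using cd(2) by simp
        next
          case False then show ?thesis unfolding cr1_def using dN by blast
        qed
      qed
      have "a = u \<or> b = u" using nv abV by blast
      then show ?thesis
      proof
        assume "a = u" then show ?thesis using key[OF ab _ abV(2)] by blast
      next
        assume "b = u"
        moreover have "{b, a} \<in> extE (units X)" using ab by (simp add: insert_commute)
        ultimately show ?thesis using key[of b a] abV(1) by blast
      qed
    qed
  qed
  obtain cr' where cr': "cr1 \<subseteq> cr'" "\<forall>a. a \<notin> V - {u} \<longrightarrow> (a \<in> cr') = (a \<in> cr1)"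
     "\<forall>a b. {a, b} \<in> extE (units X) \<longrightarrow> a \<in> cr' \<or> b \<in> cr'"
     "\<forall>\<sigma>\<in>units X. (\<forall>x\<in>X. (\<sigma>, x) \<in> cr') \<longrightarrow> removable (Hs H (V - {u}) \<sigma>) (EHs EH H (V - {u}) \<sigma>) (q1 \<sigma>)"
    using delsave.IH[OF Vn En Inv1n[unfolded f'_def] Inv2n] by blast
  have agree: "\<forall>a. a \<notin> V \<longrightarrow> (a \<in> cr') = (a \<in> cr)"
  proof (intro allI impI)
    fix a assume "a \<notin> V"
    then have "(a \<in> cr') = (a \<in> cr1)" using cr'(2) by blast
    moreover have "(a \<in> cr1) = (a \<in> cr)" using \<open>a \<notin> V\<close> uV extNV unfolding cr1_def by auto
    ultimately show "(a \<in> cr') = (a \<in> cr)" by simp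
  qed
  have units_ok: "\<forall>\<sigma>\<in>units X. (\<forall>x\<in>X. (\<sigma>, x) \<in> cr') \<longrightarrow> removable (Hs H V \<sigma>) (EHs EH H V \<sigma>) (q \<sigma>)"
  proof (intro ballI impI)
    fix \<sigma> assume sU: "\<sigma> \<in> units X" and allc: "\<forall>x\<in>X. (\<sigma>, x) \<in> cr'"
    have remn: "removable (Hs H (V - {u}) \<sigma>) (EHs EH H (V - {u}) \<sigma>) (q1 \<sigma>)" using cr'(4) sU allc by blast
    show "removable (Hs H V \<sigma>) (EHs EH H V \<sigma>) (q \<sigma>)"
    proof (cases "\<sigma> = \<sigma>0")
      case False
      have "Hs H (V - {u}) \<sigma> = Hs H V \<sigma>" unfolding Hs_def using False u by auto
      moreover then have "EHs EH H (V - {u}) \<sigma> = EHs EH H V \<sigma>" unfolding EHs_def by simp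
      moreover have "q1 \<sigma> = q \<sigma>" unfolding q1_def using False by simp
      ultimately show ?thesis using remn by simp
    next
      case True
      note ss = True
      have Hn: "Hs H (V - {u}) \<sigma> = H0 - {u0}" unfolding Hs_def H0_def True u by auto
      have En0: "EHs EH H (V - {u}) \<sigma> = {e \<in> E0. u0 \<notin> e}" unfolding EHs_def E0_def Hn
        unfolding H0_def by auto
      have qn: "q1 \<sigma> = delsave_fun E0 (q \<sigma>0) u0 WH" unfolding q1_def True by simp
      have remH: "removable (H0 - {u0}) {e \<in> E0. u0 \<notin> e} (delsave_fun E0 (q \<sigma>0) u0 WH)"
        using remn Hn En0 qn by simp
      have wfH0: "wfg (H0 - {u0}) {e \<in> E0. u0 \<notin> e}"
      proof -
        have "wfg H0 E0"
          unfolding wfg_def E0_def EHs_def H0_def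
        proof
          fix e assume e: "e \<in> {e \<in> EH. e \<subseteq> Hs H V \<sigma>0}"
          have all: "\<forall>e\<in>EH. \<exists>a b. a \<noteq> b \<and> a \<in> H \<and> b \<in> H \<and> e = {a, b}"
            using sg unfolding simple_graph_def by (rule conjunct2)
          have eEH: "e \<in> EH" using e by simp
          from bspec[OF all eEH] obtain a b where ab: "a \<noteq> b" "e = {a, b}" by blast
          then show "\<exists>a b. a \<noteq> b \<and> a \<in> Hs H V \<sigma>0 \<and> b \<in> Hs H V \<sigma>0 \<and> e = {a, b}"
            using e by (intro exI[of _ a] exI[of _ b]) auto
        qed
        then show ?thesis by (rule wfg_del)
      qed
      have u0H0: "u0 \<in> H0" unfolding H0_def Hs_def using u0H uV u by simp
      have WHsub: "WH \<subseteq> nbhd E0 u0"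
      proof
        fix v assume "v \<in> WH"
        then have "(\<sigma>0, v) \<in> W" unfolding WH_def Wv_def by simp
        then have "(\<sigma>0, v) \<in> nbhd E u" using delsave.hyps(2) by blast
        moreover then have "v \<in> H" using nb_own by fastforce
        ultimately show "v \<in> nbhd E0 u0" using N4 by blast
      qed
      have finWv: "finite Wv"
      proof -
        have "Wv = snd ` (W \<inter> {w. fst w = \<sigma>0})" unfolding Wv_def by force
        then show ?thesis using finW by simp
      qed
      have img: "W \<inter> {w. fst w = \<sigma>0} = (\<lambda>v. (\<sigma>0, v)) ` Wv" unfolding Wv_def by force
      have injP: "inj_on (\<lambda>v. (\<sigma>0, v)) Wv" by (rule inj_onI) simp
      have s_int: "sum f (W \<inter> {w. fst w = \<sigma>0}) = sum (\<lambda>v. f (\<sigma>0, v)) Wv"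
        unfolding img using sum.reindex[OF injP, of f] by (simp add: comp_def)
      have Wext: "W - {w. fst w = \<sigma>0} = W \<inter> extN"
        using delsave.hyps(2) unfolding extN_def by blast
      have split: "sum f W = sum f (W \<inter> {w. fst w = \<sigma>0}) + sum f (W \<inter> extN)"
        using sum.Int_Diff[OF finW, of f "{w. fst w = \<sigma>0}"] Wext by simp
      have ext_ge0: "sum f (W \<inter> extN) \<ge> 0"
      proof (rule sum_nonneg)
        fix w assume "w \<in> W \<inter> extN"
        then have "f w \<ge> 1" using Wpos by blast
        then show "0 \<le> f w" by simp
      qed
      have ext_ge1: "W \<inter> extN \<noteq> {} \<Longrightarrow> sum f (W \<inter> extN) \<ge> 1"
      proof -
        assume "W \<inter> extN \<noteq> {}"
        then obtain w where w: "w \<in> W \<inter> extN" by blast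
        have Wnn: "\<And>x. x \<in> W \<inter> extN - {w} \<Longrightarrow> 0 \<le> f x"
        proof -
          fix x assume "x \<in> W \<inter> extN - {w}"
          then have "f x \<ge> 1" using Wpos by blast
          then show "0 \<le> f x" by simp
        qed
        have finWE: "finite (W \<inter> extN)" by (rule finite_subset[OF _ finW]) blast
        have "f w \<le> sum f (W \<inter> extN)" using member_le_sum[OF w Wnn finWE] .
        moreover have "f w \<ge> 1" using w by (intro Wpos) blast
        ultimately show ?thesis by linarith
      qed
      have sWH: "sum (q \<sigma>0) WH \<le> sum (\<lambda>v. f (\<sigma>0, v)) Wv"
      proof -
        have "sum (q \<sigma>0) WH \<le> sum (\<lambda>v. f (\<sigma>0, v)) WH"
          by (rule sum_mono) (simp add: WH_def)
        also have "\<dots> \<le> sum (\<lambda>v. f (\<sigma>0, v)) Wv"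
        proof (rule sum_mono2[OF finWv])
          show "WH \<subseteq> Wv" unfolding WH_def by blast
          fix x assume "x \<in> Wv - WH"
          then have "(\<sigma>0, x) \<in> W" unfolding Wv_def by blast
          then have "f (\<sigma>0, x) \<ge> 1" by (rule Wpos)
          then show "0 \<le> f (\<sigma>0, x)" by simp
        qed
        finally show ?thesis .
      qed
      have qu: "f u - (if u0 \<in> X \<and> u \<notin> cr then 1 else 0) \<le> q \<sigma>0 u0"
        using Inv1 s0U u0H uV u by blast
      have less: "sum (q \<sigma>0) WH < q \<sigma>0 u0"
      proof (cases "u0 \<in> X \<and> u \<notin> cr")
        case False
        then have "(if u0 \<in> X \<and> u \<notin> cr then 1 else 0) = (0::int)" by (rule if_not_P)
        then have "f u \<le> q \<sigma>0 u0" using qu by simp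
        then show ?thesis using split ext_ge0 sWH s_int delsave.hyps(3) by linarith
      next
        case True
        then have "u \<in> cr'" using allc u ss by simp
        then have "u \<in> cr1" using cr'(2) by blast
        then have "W \<inter> extN \<noteq> {}" using True uext unfolding cr1_def by (auto split: if_splits)
        then have "sum f (W \<inter> extN) \<ge> 1" by (rule ext_ge1)
        moreover have "(if u0 \<in> X \<and> u \<notin> cr then 1 else 0) = (1::int)" using True by (rule if_P)
        then have "f u - 1 \<le> q \<sigma>0 u0" using qu by simp
        ultimately show ?thesis using split sWH s_int delsave.hyps(3) by linarith
      qed
      have legal: "\<forall>x\<in>H0 - {u0}. 1 \<le> delsave_fun E0 (q \<sigma>0) u0 WH x"
        using removable_pos[OF remH wfH0] by blast
      have "removable H0 E0 (q \<sigma>0)"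
        by (rule removable.delsave[OF u0H0 WHsub less legal remH])
      then show ?thesis unfolding True H0_def E0_def .
    qed
  qed
  show ?case
    by (rule exI[of _ cr'], intro conjI) (use crcr1 cr'(1) agree cr'(3) units_ok in blast)+
qed

end

definition pre :: "'a list \<Rightarrow> 'a \<Rightarrow> 'a list" where
  "pre \<sigma> x = takeWhile (\<lambda>y. y \<noteq> x) \<sigma>"

definition leafE :: "'a list \<Rightarrow> 'a set \<Rightarrow> ('a list \<times> 'a) set set" where
  "leafE \<sigma> S = {{(pre \<sigma> x, x), (\<sigma>, x)} | x. x \<in> S}"

lemma pre_eq: "x \<notin> set \<rho> \<Longrightarrow> pre (\<rho> @ x # \<tau>) x = \<rho>"
proof -
  assume "x \<notin> set \<rho>"
  then have "takeWhile (\<lambda>y. y \<noteq> x) (\<rho> @ x # \<tau>) = \<rho> @ takeWhile (\<lambda>y. y \<noteq> x) (x # \<tau>)"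
    by (intro takeWhile_append2) auto
  then show ?thesis unfolding pre_def by simp
qed

lemma pre_split: "x \<in> set \<sigma> \<Longrightarrow> \<exists>\<tau>. \<sigma> = pre \<sigma> x @ x # \<tau>"
proof -
  assume "x \<in> set \<sigma>"
  then obtain ys zs where s: "\<sigma> = ys @ x # zs" "x \<notin> set ys" using split_list_first by metis
  then have "pre \<sigma> x = ys" using pre_eq by metis
  then show ?thesis using s by blast
qed

lemma pre_unique: "distinct \<sigma> \<Longrightarrow> \<sigma> = \<rho> @ x # \<tau> \<Longrightarrow> pre \<sigma> x = \<rho>"
proof -
  assume d: "distinct \<sigma>" and s: "\<sigma> = \<rho> @ x # \<tau>"
  have "distinct (\<rho> @ x # \<tau>)" using d s by simp
  then have "x \<notin> set \<rho>" by simp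
  then have "pre (\<rho> @ x # \<tau>) x = \<rho>" by (rule pre_eq)
  then show ?thesis using s by simp
qed

lemma pre_len: "x \<in> set \<sigma> \<Longrightarrow> length (pre \<sigma> x) < length \<sigma>"
proof -
  assume a: "x \<in> set \<sigma>"
  obtain \<tau> where "\<sigma> = pre \<sigma> x @ x # \<tau>" using pre_split[OF a] ..
  then have "length \<sigma> = length (pre \<sigma> x @ x # \<tau>)" by (rule arg_cong)
  then show ?thesis by simp
qed

lemma extE_single: "distinct \<sigma> \<Longrightarrow> extE {\<sigma>} = leafE \<sigma> (set \<sigma>)"
proof
  assume d: "distinct \<sigma>"
  show "extE {\<sigma>} \<subseteq> leafE \<sigma> (set \<sigma>)"
  proof
    fix e assume "e \<in> extE {\<sigma>}"
    then obtain \<rho> x \<tau> where r: "\<rho> @ x # \<tau> = \<sigma>" "e = {(\<rho>, x), (\<rho> @ x # \<tau>, x)}"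
      unfolding extE_def by blast
    have "pre \<sigma> x = \<rho>" using pre_unique[OF d r(1)[symmetric]] .
    moreover have "x \<in> set \<sigma>" using r(1) by auto
    ultimately show "e \<in> leafE \<sigma> (set \<sigma>)" unfolding leafE_def using r by auto
  qed
  show "leafE \<sigma> (set \<sigma>) \<subseteq> extE {\<sigma>}"
  proof
    fix e assume "e \<in> leafE \<sigma> (set \<sigma>)"
    then obtain x where x: "x \<in> set \<sigma>" "e = {(pre \<sigma> x, x), (\<sigma>, x)}" unfolding leafE_def by blast
    obtain \<tau> where t: "\<sigma> = pre \<sigma> x @ x # \<tau>" using pre_split[OF x(1)] ..
    show "e \<in> extE {\<sigma>}" unfolding extE_def x(2)
      by (rule CollectI, rule exI[of _ "pre \<sigma> x"], rule exI[of _ x], rule exI[of _ \<tau>])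
        (simp add: t[symmetric])
  qed
qed

lemma leaf_del:
  assumes "finite S"
  shows "S \<subseteq> set \<sigma> \<Longrightarrow> (\<forall>x\<in>S. {(pre \<sigma> x, x), (\<sigma>, x)} \<notin> Q)
    \<Longrightarrow> (\<forall>x\<in>S. F1 (pre \<sigma> x, x) = 1)
    \<Longrightarrow> \<exists>F1'. reach V (Q \<union> leafE \<sigma> S) F1 Q F1' \<and> (\<forall>x\<in>S. F1' (\<sigma>, x) = F1 (\<sigma>, x) - 1)
          \<and> (\<forall>y. y \<notin> (\<lambda>x. (\<sigma>, x)) ` S \<longrightarrow> F1' y = F1 y)"
  using assms
proof (induction S arbitrary: F1 rule: finite_induct)
  case empty
  have "Q \<union> leafE \<sigma> {} = Q" unfolding leafE_def by simp
  then show ?case using reach.rrefl[of V Q F1] by auto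
next
  case (insert x S F1)
  have xs: "x \<in> set \<sigma>" using insert.prems(1) by blast
  have neq: "(\<sigma>, x) \<noteq> (pre \<sigma> x, x)" using pre_len[OF xs] by auto
  define F1x where "F1x = F1((\<sigma>, x) := F1 (\<sigma>, x) - F1 (pre \<sigma> x, x))"
  have pre1: "\<forall>y\<in>S. F1x (pre \<sigma> y, y) = 1"
  proof
    fix y assume y: "y \<in> S"
    then have "y \<noteq> x" using insert.hyps(2) by blast
    then have ne: "(pre \<sigma> y, y) \<noteq> (\<sigma>, x)" by simp
    have "F1x (pre \<sigma> y, y) = F1 (pre \<sigma> y, y)" unfolding F1x_def using ne by (rule fun_upd_other)
    then show "F1x (pre \<sigma> y, y) = 1" using insert.prems(3) y by simp
  qed
  obtain F1' where F1': "reach V (Q \<union> leafE \<sigma> S) F1x Q F1'" "\<forall>y\<in>S. F1' (\<sigma>, y) = F1x (\<sigma>, y) - 1"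
    "\<forall>y. y \<notin> (\<lambda>x. (\<sigma>, x)) ` S \<longrightarrow> F1' y = F1x y"
    using insert.IH[of F1x] insert.prems(1,2) pre1 by blast
  have emem: "{(\<sigma>, x), (pre \<sigma> x, x)} \<in> Q \<union> leafE \<sigma> (insert x S)"
    unfolding leafE_def by (auto simp: insert_commute)
  have eq: "(Q \<union> leafE \<sigma> (insert x S)) - {{(\<sigma>, x), (pre \<sigma> x, x)}} = Q \<union> leafE \<sigma> S"
  proof -
    have nQ: "{(\<sigma>, x), (pre \<sigma> x, x)} \<notin> Q" using insert.prems(2) by (simp add: insert_commute)
    have nL: "{(\<sigma>, x), (pre \<sigma> x, x)} \<notin> leafE \<sigma> S"
    proof
      assume "{(\<sigma>, x), (pre \<sigma> x, x)} \<in> leafE \<sigma> S"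
      then obtain y where y: "y \<in> S" "{(\<sigma>, x), (pre \<sigma> x, x)} = {(pre \<sigma> y, y), (\<sigma>, y)}"
        unfolding leafE_def by blast
      then have "(\<sigma>, x) \<in> {(pre \<sigma> y, y), (\<sigma>, y)}" by blast
      then have "x = y" by auto
      then show False using y(1) insert.hyps(2) by blast
    qed
    have "leafE \<sigma> (insert x S) = insert {(\<sigma>, x), (pre \<sigma> x, x)} (leafE \<sigma> S)"
      unfolding leafE_def by (auto simp: insert_commute)
    then show ?thesis using nQ nL by auto
  qed
  have r0: "reach V ((Q \<union> leafE \<sigma> (insert x S)) - {{(\<sigma>, x), (pre \<sigma> x, x)}}) F1x Q F1'"
    by (subst eq) (rule F1'(1))
  have r: "reach V (Q \<union> leafE \<sigma> (insert x S)) F1 Q F1'"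
    using reach.rdel[OF emem neq r0[unfolded F1x_def]] .
  have v1: "\<forall>y\<in>insert x S. F1' (\<sigma>, y) = F1 (\<sigma>, y) - 1"
  proof
    fix y assume y: "y \<in> insert x S"
    show "F1' (\<sigma>, y) = F1 (\<sigma>, y) - 1"
    proof (cases "y = x")
      case True
      then have "(\<sigma>, y) \<notin> (\<lambda>x. (\<sigma>, x)) ` S" using insert.hyps(2) by auto
      then have "F1' (\<sigma>, y) = F1x (\<sigma>, y)" using F1'(3) by blast
      then show ?thesis unfolding F1x_def using True insert.prems(3) by simp
    next
      case False
      then have "y \<in> S" using y by blast
      then show ?thesis using F1'(2) False unfolding F1x_def by simp
    qed
  qed
  have v2: "\<forall>y. y \<notin> (\<lambda>x. (\<sigma>, x)) ` insert x S \<longrightarrow> F1' y = F1 y"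
  proof (intro allI impI)
    fix y assume "y \<notin> (\<lambda>x. (\<sigma>, x)) ` insert x S"
    then have y1: "y \<notin> (\<lambda>x. (\<sigma>, x)) ` S" and y2: "y \<noteq> (\<sigma>, x)" by auto
    have "F1' y = F1x y" using F1'(3) y1 by blast
    moreover have "F1x y = F1 y" unfolding F1x_def using y2 by (rule fun_upd_other)
    ultimately show "F1' y = F1 y" by simp
  qed
  show ?case using r v1 v2 by blast
qed

lemma intE_Un: "intE EH (A \<union> B) = intE EH A \<union> intE EH B"
  unfolding intE_def by blast

lemma extE_Un: "extE (A \<union> B) = extE A \<union> extE B"
  unfolding extE_def by blast

lemma intE_single: "intE EH {\<sigma>} = (\<lambda>e. (\<lambda>v. (\<sigma>, v)) ` e) ` EH"
  unfolding intE_def by blast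

context
  fixes H :: "'a set" and EH :: "'a set set" and X :: "'a set" and h :: "'a \<Rightarrow> int"
  assumes sg: "simple_graph H EH" and XH: "X \<subseteq> H" and degH: "strict_t3_degenerate H EH h"
begin

lemma deg_claim:
  "n = card (units X - P) \<Longrightarrow> P \<subseteq> units X
   \<Longrightarrow> (\<forall>\<sigma>\<in>units X - P. \<forall>v\<in>H. F (\<sigma>, v) = rf h X (\<sigma>, v))
   \<Longrightarrow> (\<forall>\<sigma>\<in>P. \<forall>v\<in>H. F (\<sigma>, v) = 1)
   \<Longrightarrow> strict_t3_degenerate (rV H X) (intE EH (units X - P) \<union> extE (units X - P)) F"
proof (induction n arbitrary: P F rule: less_induct)
  case (less n P F)
  have fH: "finite H" using sg unfolding simple_iff by (rule conjunct1)
  have fX: "finite X" using fH XH by (rule finite_subset[rotated])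
  have fU: "finite (units X)" using fX by (rule finite_units)
  show ?case
  proof (cases "units X - P = {}")
    case True
    have e: "intE EH (units X - P) \<union> extE (units X - P) = {}"
      unfolding True intE_def extE_def by blast
    have "\<forall>y\<in>rV H X. F y > 0"
    proof
      fix y assume "y \<in> rV H X"
      then obtain \<sigma> v where y: "y = (\<sigma>, v)" "\<sigma> \<in> units X" "v \<in> H" unfolding rV_def by blast
      then have "\<sigma> \<in> P" using True by blast
      then show "F y > 0" using less.prems(4) y by simp
    qed
    then show ?thesis unfolding e by (intro strict_t3_degenerate.finish) auto
  next
    case False
    then obtain \<sigma>' where "\<sigma>' \<in> units X - P" by blast
    then obtain \<sigma> where sm: "\<sigma> \<in> units X - P" "\<And>\<tau>. \<tau> \<in> units X - P \<Longrightarrow> length \<sigma> \<le> length \<tau>"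
      using ex_has_least_nat[of "\<lambda>\<sigma>. \<sigma> \<in> units X - P" \<sigma>' length] by blast
    have sU: "\<sigma> \<in> units X" and sP: "\<sigma> \<notin> P" using sm(1) by auto
    have dist: "distinct \<sigma>" and sX: "set \<sigma> \<subseteq> X" using sU unfolding units_def by auto
    define P' where "P' = insert \<sigma> P"
    define R where "R = intE EH (units X - P') \<union> extE (units X - P')"
    define Q where "Q = R \<union> intE EH {\<sigma>}"
    have Ueq: "units X - P = (units X - P') \<union> {\<sigma>}" unfolding P'_def using sU sP by blast
    have Eeq: "intE EH (units X - P) \<union> extE (units X - P) = Q \<union> leafE \<sigma> (set \<sigma>)"
      unfolding Ueq intE_Un extE_Un extE_single[OF dist] Q_def R_def by blast
    have preP: "\<And>x. x \<in> set \<sigma> \<Longrightarrow> pre \<sigma> x \<in> P"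
    proof -
      fix x assume x: "x \<in> set \<sigma>"
      obtain \<tau> where t: "\<sigma> = pre \<sigma> x @ x # \<tau>" using pre_split[OF x] ..
      have "pre \<sigma> x \<in> units X" using units_prefix[of "pre \<sigma> x" "x # \<tau>" X] t[symmetric] sU by simp
      moreover have "length (pre \<sigma> x) < length \<sigma>" by (rule pre_len[OF x])
      ultimately show "pre \<sigma> x \<in> P" using sm(2) by force
    qed
    have notQ: "\<forall>x\<in>set \<sigma>. {(pre \<sigma> x, x), (\<sigma>, x)} \<notin> Q"
    proof
      fix x assume x: "x \<in> set \<sigma>"
      have ne: "pre \<sigma> x \<noteq> \<sigma>" using pre_len[OF x] by auto
      have n1: "{(pre \<sigma> x, x), (\<sigma>, x)} \<notin> intE EH S" for S
      proof
        assume "{(pre \<sigma> x, x), (\<sigma>, x)} \<in> intE EH S"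
        from int_cases[OF this] ne show False by simp
      qed
      have n2: "{(pre \<sigma> x, x), (\<sigma>, x)} \<notin> extE (units X - P')"
      proof
        assume a: "{(pre \<sigma> x, x), (\<sigma>, x)} \<in> extE (units X - P')"
        show False
        proof (rule ext_cases[OF a])
          fix \<rho> y \<tau> assume r: "\<rho> @ y # \<tau> \<in> units X - P'"
            "((pre \<sigma> x, x) = (\<rho>, y) \<and> (\<sigma>, x) = (\<rho> @ y # \<tau>, y)) \<or>
             ((pre \<sigma> x, x) = (\<rho> @ y # \<tau>, y) \<and> (\<sigma>, x) = (\<rho>, y))"
          from r(2) show False
          proof
            assume "(pre \<sigma> x, x) = (\<rho>, y) \<and> (\<sigma>, x) = (\<rho> @ y # \<tau>, y)"
            then have "\<sigma> = \<rho> @ y # \<tau>" by simp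
            then show False using r(1) unfolding P'_def by simp
          next
            assume a: "(pre \<sigma> x, x) = (\<rho> @ y # \<tau>, y) \<and> (\<sigma>, x) = (\<rho>, y)"
            then have e1: "pre \<sigma> x = \<rho> @ y # \<tau>" and e2: "\<rho> = \<sigma>" by auto
            have "length (pre \<sigma> x) = length (\<rho> @ y # \<tau>)" using e1 by (rule arg_cong)
            then have "length (pre \<sigma> x) > length \<rho>" by simp
            then show False using pre_len[OF x] e2 by simp
          qed
        qed
      qed
      show "{(pre \<sigma> x, x), (\<sigma>, x)} \<notin> Q" unfolding Q_def R_def using n1 n2 by blast
    qed
    have preval: "\<forall>x\<in>set \<sigma>. F (pre \<sigma> x, x) = 1"
    proof
      fix x assume x: "x \<in> set \<sigma>"
      then have "x \<in> H" using sX XH by blast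
      then show "F (pre \<sigma> x, x) = 1" using less.prems(4) preP[OF x] by blast
    qed
    obtain F1 where F1: "reach (rV H X) (Q \<union> leafE \<sigma> (set \<sigma>)) F Q F1"
      "\<forall>x\<in>set \<sigma>. F1 (\<sigma>, x) = F (\<sigma>, x) - 1" "\<forall>y. y \<notin> (\<lambda>x. (\<sigma>, x)) ` set \<sigma> \<longrightarrow> F1 y = F y"
      using leaf_del[OF finite_set subset_refl notQ preval] by blast
    define G2 where "G2 = (\<lambda>y. if fst y = \<sigma> \<and> snd y \<in> H then h (snd y) else F1 y)"
    have S2: "(\<lambda>v. (\<sigma>, v)) ` H \<subseteq> rV H X" using sU unfolding rV_def by auto
    have fS2: "finite ((\<lambda>v. (\<sigma>, v)) ` H)" using fH by simp
    have r2: "reach (rV H X) Q F1 Q G2"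
    proof (rule reach_reduce_to[OF fS2 S2])
      show "\<forall>y\<in>(\<lambda>v. (\<sigma>, v)) ` H. G2 y \<le> F1 y"
      proof
        fix y assume "y \<in> (\<lambda>v. (\<sigma>, v)) ` H"
        then obtain v where v: "y = (\<sigma>, v)" "v \<in> H" by blast
        have Fv: "F (\<sigma>, v) = h v + (if v \<in> X then 1 else 0)"
          using less.prems(3) sm(1) v(2) unfolding rf_def by simp
        show "G2 y \<le> F1 y"
        proof (cases "v \<in> set \<sigma>")
          case True
          then have "v \<in> X" using sX by blast
          then show ?thesis using F1(2) True Fv v unfolding G2_def by simp
        next
          case False
          then have "F1 (\<sigma>, v) = F (\<sigma>, v)" using F1(3) by auto
          then show ?thesis using Fv v unfolding G2_def by simp
        qed
      qed
      show "\<forall>y. y \<notin> (\<lambda>v. (\<sigma>, v)) ` H \<longrightarrow> G2 y = F1 y"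
      proof (intro allI impI)
        fix y assume "y \<notin> (\<lambda>v. (\<sigma>, v)) ` H"
        then have "\<not> (fst y = \<sigma> \<and> snd y \<in> H)" by (cases y) auto
        then show "G2 y = F1 y" unfolding G2_def by (rule if_not_P)
      qed
    qed
    obtain h2 where h2: "reach H EH h {} h2" "\<forall>v\<in>H. h2 v > 0" using deg_reach[OF degH] by blast
    have wfH: "wfg H EH" by (rule simple_wfg[OF sg])
    have injP: "inj_on (\<lambda>v. (\<sigma>, v)) H" by (rule inj_onI) simp
    have notR: "\<forall>e\<in>EH. (\<lambda>v. (\<sigma>, v)) ` e \<notin> R"
    proof
      fix e assume e: "e \<in> EH"
      obtain a b where ab: "a \<noteq> b" "e = {a, b}" using wfH e unfolding wfg_def by blast
      have im: "(\<lambda>v. (\<sigma>, v)) ` e = {(\<sigma>, a), (\<sigma>, b)}" using ab by simp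
      have n1: "{(\<sigma>, a), (\<sigma>, b)} \<notin> intE EH (units X - P')"
      proof
        assume "{(\<sigma>, a), (\<sigma>, b)} \<in> intE EH (units X - P')"
        from int_cases[OF this] ab(1) have "\<sigma> \<in> units X - P'" by simp
        then show False unfolding P'_def by simp
      qed
      have n2: "{(\<sigma>, a), (\<sigma>, b)} \<notin> extE (units X - P')"
      proof
        assume "{(\<sigma>, a), (\<sigma>, b)} \<in> extE (units X - P')"
        from ext_fst[OF this] show False by simp
      qed
      show "(\<lambda>v. (\<sigma>, v)) ` e \<notin> R" unfolding im R_def using n1 n2 by blast
    qed
    have G2v: "\<forall>x\<in>H. G2 (\<sigma>, x) = h x" unfolding G2_def by simp
    obtain F2 where F2: "reach (rV H X) (R \<union> (\<lambda>e. (\<lambda>v. (\<sigma>, v)) ` e) ` EH) G2 (R \<union> (\<lambda>e. (\<lambda>v. (\<sigma>, v)) ` e) ` {}) F2"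
      "\<forall>x\<in>H. F2 (\<sigma>, x) = h2 x" "\<forall>y. y \<notin> (\<lambda>v. (\<sigma>, v)) ` H \<longrightarrow> F2 y = G2 y"
      using reach_lift[OF h2(1) wfH injP S2 notR G2v] by blast
    have r3: "reach (rV H X) Q G2 R F2"
      using F2(1) unfolding Q_def intE_single by simp
    define F3 where "F3 = (\<lambda>y. if fst y = \<sigma> \<and> snd y \<in> H then 1 else F2 y)"
    have r4: "reach (rV H X) R F2 R F3"
    proof (rule reach_reduce_to[OF fS2 S2])
      show "\<forall>y\<in>(\<lambda>v. (\<sigma>, v)) ` H. F3 y \<le> F2 y"
      proof
        fix y assume "y \<in> (\<lambda>v. (\<sigma>, v)) ` H"
        then obtain v where v: "y = (\<sigma>, v)" "v \<in> H" by blast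
        have "h2 v > 0" using h2(2) v(2) by blast
        then show "F3 y \<le> F2 y" using F2(2) v unfolding F3_def by simp
      qed
      show "\<forall>y. y \<notin> (\<lambda>v. (\<sigma>, v)) ` H \<longrightarrow> F3 y = F2 y"
      proof (intro allI impI)
        fix y assume "y \<notin> (\<lambda>v. (\<sigma>, v)) ` H"
        then have "\<not> (fst y = \<sigma> \<and> snd y \<in> H)" by (cases y) auto
        then show "F3 y = F2 y" unfolding F3_def by (rule if_not_P)
      qed
    qed
    have rall: "reach (rV H X) (Q \<union> leafE \<sigma> (set \<sigma>)) F R F3"
      using reach_trans[OF F1(1) reach_trans[OF r2 reach_trans[OF r3 r4]]] .
    have off: "\<And>\<sigma>' v. \<sigma>' \<noteq> \<sigma> \<Longrightarrow> F3 (\<sigma>', v) = F (\<sigma>', v)"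
    proof -
      fix \<sigma>' v assume ne: "\<sigma>' \<noteq> \<sigma>"
      have a: "(\<sigma>', v) \<notin> (\<lambda>v. (\<sigma>, v)) ` H" "(\<sigma>', v) \<notin> (\<lambda>x. (\<sigma>, x)) ` set \<sigma>" using ne by auto
      have "F3 (\<sigma>', v) = F2 (\<sigma>', v)" unfolding F3_def using ne by simp
      also have "\<dots> = G2 (\<sigma>', v)" using F2(3) a(1) by blast
      also have "\<dots> = F1 (\<sigma>', v)" unfolding G2_def using ne by simp
      also have "\<dots> = F (\<sigma>', v)" using F1(3) a(2) by blast
      finally show "F3 (\<sigma>', v) = F (\<sigma>', v)" .
    qed
    have c: "card (units X - P') < n"
    proof -
      have "units X - P' = (units X - P) - {\<sigma>}" unfolding P'_def by blast
      then have "card (units X - P') = card (units X - P) - 1" using sm(1) fU by simp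
      moreover have "card (units X - P) > 0" using sm(1) fU by (auto simp: card_gt_0_iff)
      ultimately show ?thesis using less.prems(1) by simp
    qed
    have p1: "P' \<subseteq> units X" unfolding P'_def using sU less.prems(2) by blast
    have p2: "\<forall>\<sigma>'\<in>units X - P'. \<forall>v\<in>H. F3 (\<sigma>', v) = rf h X (\<sigma>', v)"
    proof (intro ballI)
      fix \<sigma>' v assume s: "\<sigma>' \<in> units X - P'" and v: "v \<in> H"
      then have "\<sigma>' \<noteq> \<sigma>" unfolding P'_def by blast
      then have "F3 (\<sigma>', v) = F (\<sigma>', v)" by (rule off)
      moreover have "\<sigma>' \<in> units X - P" using s unfolding P'_def by blast
      ultimately show "F3 (\<sigma>', v) = rf h X (\<sigma>', v)" using less.prems(3) v by simp
    qed
    have p3: "\<forall>\<sigma>'\<in>P'. \<forall>v\<in>H. F3 (\<sigma>', v) = 1"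
    proof (intro ballI)
      fix \<sigma>' v assume s: "\<sigma>' \<in> P'" and v: "v \<in> H"
      show "F3 (\<sigma>', v) = 1"
      proof (cases "\<sigma>' = \<sigma>")
        case True then show ?thesis unfolding F3_def using v by simp
      next
        case False
        then have "\<sigma>' \<in> P" using s unfolding P'_def by blast
        then show ?thesis using off[OF False] less.prems(4) v by simp
      qed
    qed
    have "strict_t3_degenerate (rV H X) R F3"
      unfolding R_def by (rule less.IH[OF c refl p1 p2 p3])
    then show ?thesis unfolding Eeq using reach_deg[OF rall] by blast
  qed
qed

lemma round_deg: "strict_t3_degenerate (rV H X) (rE EH X) (rf h X)"
proof -
  have "strict_t3_degenerate (rV H X) (intE EH (units X - {}) \<union> extE (units X - {})) (rf h X)"
    by (rule deg_claim[OF refl]) auto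
  then show ?thesis unfolding rE_def by simp
qed

end

lemma round:
  assumes sg: "simple_graph H EH" and XH: "X \<subseteq> H"
    and deg: "strict_t3_degenerate H EH h" and nrem: "\<not> removable H EH h"
  shows "simple_graph (rV H X) (rE EH X) \<and> strict_t3_degenerate (rV H X) (rE EH X) (rf h X)
     \<and> \<not> removable (rV H X) (rE EH X) (rf h X)"
proof -
  have "\<not> removable (rV H X) (rE EH X) (rf h X)"
  proof
    assume rem: "removable (rV H X) (rE EH X) (rf h X)"
    have wf: "wfg (rV H X) (rE EH X)" by (rule rE_wfg[OF sg XH])
    have Eeq: "rE EH X = {e \<in> rE EH X. e \<subseteq> rV H X}"
    proof -
      have "\<forall>e\<in>rE EH X. e \<subseteq> rV H X"
      proof
        fix e assume e: "e \<in> rE EH X"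
        obtain a b where "a \<in> rV H X" "b \<in> rV H X" "e = {a, b}" using wf e unfolding wfg_def by blast
        then show "e \<subseteq> rV H X" by simp
      qed
      then show ?thesis by blast
    qed
    have inv1: "\<forall>\<sigma>\<in>units X. \<forall>v\<in>H. (\<sigma>, v) \<in> rV H X \<longrightarrow>
        rf h X (\<sigma>, v) - (if v \<in> X \<and> (\<sigma>, v) \<notin> {} then 1 else 0) \<le> h v"
      by (simp add: rf_def)
    have inv2: "\<forall>a b. {a, b} \<in> extE (units X) \<longrightarrow> (a \<notin> rV H X \<or> b \<notin> rV H X) \<longrightarrow> a \<in> {} \<or> b \<in> {}"
    proof (intro allI impI)
      fix a b assume "{a, b} \<in> extE (units X)" "a \<notin> rV H X \<or> b \<notin> rV H X"
      then show "a \<in> {} \<or> b \<in> {}" using ext_in[OF _ XH] by blast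
    qed
    obtain cr' where c: "\<forall>a b. {a, b} \<in> extE (units X) \<longrightarrow> a \<in> cr' \<or> b \<in> cr'"
      "\<forall>\<sigma>\<in>units X. (\<forall>x\<in>X. (\<sigma>, x) \<in> cr') \<longrightarrow> removable (Hs H (rV H X) \<sigma>) (EHs EH H (rV H X) \<sigma>) h"
      using rem_claim[where cr="{}" and q="\<lambda>_. h", OF sg XH rem subset_refl Eeq inv1 inv2] by blast
    have edge: "\<And>\<rho> x \<tau>. \<rho> @ x # \<tau> \<in> units X \<Longrightarrow> (\<rho>, x) \<in> cr' \<or> (\<rho> @ x # \<tau>, x) \<in> cr'"
    proof -
      fix \<rho> x \<tau> assume "\<rho> @ x # \<tau> \<in> units X"
      then have "{(\<rho>, x), (\<rho> @ x # \<tau>, x)} \<in> extE (units X)" unfolding extE_def by blast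
      then show "(\<rho>, x) \<in> cr' \<or> (\<rho> @ x # \<tau>, x) \<in> cr'" using c(1) by blast
    qed
    have fH: "finite H" using sg unfolding simple_iff by (rule conjunct1)
    have fX: "finite X" using fH XH by (rule finite_subset[rotated])
    obtain \<sigma> where s: "\<sigma> \<in> units X" "\<forall>x\<in>X. (\<sigma>, x) \<in> cr'" using forcing[OF fX edge] by blast
    have r: "removable (Hs H (rV H X) \<sigma>) (EHs EH H (rV H X) \<sigma>) h" using c(2) s by blast
    have h1: "Hs H (rV H X) \<sigma> = H" unfolding Hs_def rV_def using s(1) by auto
    have h2: "EHs EH H (rV H X) \<sigma> = EH"
    proof -
      have "\<forall>e\<in>EH. e \<subseteq> H"
      proof
        fix e assume e: "e \<in> EH"
        obtain a b where "a \<in> H" "b \<in> H" "e = {a, b}" using simple_wfg[OF sg] e unfolding wfg_def by blast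
        then show "e \<subseteq> H" by simp
      qed
      then show ?thesis unfolding EHs_def h1 by blast
    qed
    show False using r nrem unfolding h1 h2 by simp
  qed
  then show ?thesis using rE_simple[OF sg XH] round_deg[OF sg XH deg] by blast
qed

lemma rename_all:
  assumes sg: "simple_graph V E" and deg: "strict_t3_degenerate V E f" and nrem: "\<not> removable V E f"
    and inj: "inj_on \<phi> V"
  shows "simple_graph (\<phi> ` V) ((\<lambda>e. \<phi> ` e) ` E)
    \<and> strict_t3_degenerate (\<phi> ` V) ((\<lambda>e. \<phi> ` e) ` E) (\<lambda>y. f (inv_into V \<phi> y))
    \<and> \<not> removable (\<phi> ` V) ((\<lambda>e. \<phi> ` e) ` E) (\<lambda>y. f (inv_into V \<phi> y))"
proof -
  have wf: "wfg V E" by (rule simple_wfg[OF sg])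
  have fV: "finite V" using sg unfolding simple_iff by (rule conjunct1)
  have agree: "\<forall>x\<in>V. (\<lambda>y. f (inv_into V \<phi> y)) (\<phi> x) = f x" using inj by simp
  have s: "simple_graph (\<phi> ` V) ((\<lambda>e. \<phi> ` e) ` E)"
    unfolding simple_iff
  proof
    show "finite (\<phi> ` V)" using fV by simp
    show "wfg (\<phi> ` V) ((\<lambda>e. \<phi> ` e) ` E)"
      unfolding wfg_def
    proof
      fix e' assume "e' \<in> (\<lambda>e. \<phi> ` e) ` E"
      then obtain e where e: "e \<in> E" "e' = \<phi> ` e" by blast
      obtain a b where ab: "a \<noteq> b" "a \<in> V" "b \<in> V" "e = {a, b}" using wf e(1) unfolding wfg_def by blast
      have "\<phi> a \<noteq> \<phi> b" using inj ab by (auto simp: inj_on_def)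
      then show "\<exists>a b. a \<noteq> b \<and> a \<in> \<phi> ` V \<and> b \<in> \<phi> ` V \<and> e' = {a, b}"
        using ab e(2) by (intro exI[of _ "\<phi> a"] exI[of _ "\<phi> b"]) auto
    qed
  qed
  have d: "strict_t3_degenerate (\<phi> ` V) ((\<lambda>e. \<phi> ` e) ` E) (\<lambda>y. f (inv_into V \<phi> y))"
    by (rule deg_rename[OF deg wf inj agree])
  have n: "\<not> removable (\<phi> ` V) ((\<lambda>e. \<phi> ` e) ` E) (\<lambda>y. f (inv_into V \<phi> y))"
  proof
    assume "removable (\<phi> ` V) ((\<lambda>e. \<phi> ` e) ` E) (\<lambda>y. f (inv_into V \<phi> y))"
    then have "removable V E f" using removable_rename[OF _ refl refl inj wf] agree by metis
    then show False using nrem by simp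
  qed
  show ?thesis using s d n by blast
qed

lemma main_nat:
  fixes k :: int
  shows "\<And>(H :: nat set) EH h. simple_graph H EH \<Longrightarrow> (\<forall>v\<in>H. 1 \<le> h v \<and> h v \<le> k \<and> k - int m \<le> h v)
    \<Longrightarrow> strict_t3_degenerate H EH h \<Longrightarrow> \<not> removable H EH h
    \<Longrightarrow> \<exists>(G :: nat set) EG. simple_graph G EG \<and> strict_t3_degenerate G EG (\<lambda>_. k) \<and> \<not> removable G EG (\<lambda>_. k)"
proof (induction m)
  case (0 H EH h)
  have hk: "\<forall>v\<in>H. h v = k" using 0(2) by force
  have wf: "wfg H EH" by (rule simple_wfg[OF 0(1)])
  have injid: "inj_on id H" by simp
  have a1: "\<forall>x\<in>H. (\<lambda>_. k) (id x) = h x" using hk by simp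
  have "strict_t3_degenerate (id ` H) ((\<lambda>e. id ` e) ` EH) (\<lambda>_. k)"
    by (rule deg_rename[OF 0(3) wf injid a1])
  then have d: "strict_t3_degenerate H EH (\<lambda>_. k)" by simp
  have n: "\<not> removable H EH (\<lambda>_. k)"
  proof
    assume r: "removable H EH (\<lambda>_. k)"
    have e1: "H = id ` H" by simp
    have e2: "EH = (\<lambda>e. id ` e) ` EH" by simp
    have a2: "\<forall>x\<in>H. h x = (\<lambda>_. k) (id x)" using hk by simp
    have "removable H EH h" by (rule removable_rename[OF r e1 e2 injid wf a2])
    then show False using 0(4) by simp
  qed
  show ?case using 0(1) d n by blast
next
  case (Suc m H EH h)
  define X where "X = {v\<in>H. h v < k}"
  have XH: "X \<subseteq> H" unfolding X_def by blast
  have R: "simple_graph (rV H X) (rE EH X) \<and> strict_t3_degenerate (rV H X) (rE EH X) (rf h X)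
     \<and> \<not> removable (rV H X) (rE EH X) (rf h X)"
    by (rule round[OF Suc.prems(1) XH Suc.prems(3) Suc.prems(4)])
  have fV: "finite (rV H X)" using R unfolding simple_iff by blast
  obtain \<phi> :: "nat list \<times> nat \<Rightarrow> nat" where inj: "inj_on \<phi> (rV H X)"
    using finite_imp_inj_to_nat_seg[OF fV] by blast
  have R1: "simple_graph (rV H X) (rE EH X)" using R by blast
  have R2: "strict_t3_degenerate (rV H X) (rE EH X) (rf h X)" using R by blast
  have R3: "\<not> removable (rV H X) (rE EH X) (rf h X)" using R by blast
  note RR = rename_all[OF R1 R2 R3 inj]
  define h' where "h' = (\<lambda>y. rf h X (inv_into (rV H X) \<phi> y))"
  have bnd: "\<forall>y\<in>\<phi> ` rV H X. 1 \<le> h' y \<and> h' y \<le> k \<and> k - int m \<le> h' y"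
  proof
    fix y assume "y \<in> \<phi> ` rV H X"
    then obtain x where x: "x \<in> rV H X" "y = \<phi> x" by blast
    then have hy: "h' y = rf h X x" unfolding h'_def using inj by simp
    obtain \<sigma> v where xv: "x = (\<sigma>, v)" "v \<in> H" using x(1) unfolding rV_def by blast
    have b: "1 \<le> h v" "h v \<le> k" "k - int (Suc m) \<le> h v" using Suc.prems(2) xv(2) by auto
    show "1 \<le> h' y \<and> h' y \<le> k \<and> k - int m \<le> h' y"
    proof (cases "v \<in> X")
      case True
      then have "h v < k" unfolding X_def by blast
      then show ?thesis using hy xv b True unfolding rf_def by simp
    next
      case False
      then have "h v = k" using b xv(2) unfolding X_def by simp
      then show ?thesis using hy xv b False unfolding rf_def by simp
    qed
  qed
  show ?case
    by (rule Suc.IH[OF conjunct1[OF RR] bnd[unfolded h'_def] conjunct1[OF conjunct2[OF RR]] conjunct2[OF conjunct2[OF RR]]])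
qed

theorem proposition3p3:
  fixes H :: "'a set" and EH :: "'a set set" and h :: "'a \<Rightarrow> int"
  assumes "simple_graph H EH"
    and "\<forall>v\<in>H. h v \<ge> 1"
    and "strict_t3_degenerate H EH h"
    and "\<not> removable H EH h"
  shows "\<exists>(G :: nat set) (EG :: nat set set) (k :: int).
           simple_graph G EG \<and> k \<ge> 1 \<and>
           strict_t3_degenerate G EG (\<lambda>_. k) \<and> \<not> removable G EG (\<lambda>_. k)"
proof -
  have fH: "finite H" using assms(1) unfolding simple_iff by (rule conjunct1)
  have ne: "H \<noteq> {}"
  proof
    assume "H = {}"
    then have "removable H EH h" by (rule removable.empty)
    then show False using assms(4) by simp
  qed
  define k where "k = Max (h ` H)"
  have hk: "\<forall>v\<in>H. h v \<le> k" unfolding k_def using fH by simp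
  obtain v0 where v0: "v0 \<in> H" using ne by blast
  have k1: "k \<ge> 1" using hk v0 assms(2) by force
  obtain \<phi> :: "'a \<Rightarrow> nat" where inj: "inj_on \<phi> H"
    using finite_imp_inj_to_nat_seg[OF fH] by blast
  note RR = rename_all[OF assms(1) assms(3) assms(4) inj]
  define m where "m = nat (k - 1)"
  have bnd: "\<forall>y\<in>\<phi> ` H. 1 \<le> h (inv_into H \<phi> y) \<and> h (inv_into H \<phi> y) \<le> k \<and> k - int m \<le> h (inv_into H \<phi> y)"
  proof
    fix y assume "y \<in> \<phi> ` H"
    then have x: "inv_into H \<phi> y \<in> H" by (rule inv_into_into)
    then have "1 \<le> h (inv_into H \<phi> y)" "h (inv_into H \<phi> y) \<le> k" using assms(2) hk by auto
    moreover have "k - int m = 1" unfolding m_def using k1 by simp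
    ultimately show "1 \<le> h (inv_into H \<phi> y) \<and> h (inv_into H \<phi> y) \<le> k \<and> k - int m \<le> h (inv_into H \<phi> y)"
      by simp
  qed
  obtain G :: "nat set" and EG where G: "simple_graph G EG" "strict_t3_degenerate G EG (\<lambda>_. k)"
    "\<not> removable G EG (\<lambda>_. k)"
    using main_nat[OF conjunct1[OF RR] bnd conjunct1[OF conjunct2[OF RR]] conjunct2[OF conjunct2[OF RR]]]
    by blast
  show ?thesis using G k1 by blast
qed

end
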